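(* Let $f:M^2\to\mathbb{R}^3$ be a $C^\infty$-map on a $2$-manifold and $p$ a cross cap singularity of $f$. Then the first fundamental form $d\sigma^2:=df\cdot df$ of $f$ is an admissible metric, and $p$ is an intrinsic cross cap of $d\sigma^2$.
   Context: A point $p$ is a cross cap of $f$ if there are diffeomorphism germs $\phi$ of $(\mathbb{R}^2,0)$ onto a neighborhood of $p$ (in coordinates) and $\Phi$ of $\mathbb{R}^3$ such that $\Phi\circ f\circ\phi(u,v)=(u,uv,v^2)$. For a smooth positive semi-definite metric $d\sigma^2$ with $\langle\cdot,\cdot\rangle=d\sigma^2$: singular points are where it is not positive definite; $\mathcal{N}_p=\{v: d\sigma^2(v,w)=0\ \forall w\}$; the Kossowski pseudo-connection is $\Gamma(X,Y,Z)=\tfrac12\bigl(X\langle Y,Z\rangle+Y\langle X,Z\rangle-Z\langle X,Y\rangle+\langle[X,Y],Z\rangle-\langle[X,Z],Y\rangle-\langle[Y,Z],X\rangle\bigr)$; admissible: at each singular point $p$, $\Gamma(V_1,V_2,V_3)(p)=0$ whenever $V_3(p)\in\mathcal{N}_p$. A singular point $p$ of an admissible metric is an intrinsic cross cap if, in a local coordinate system $(u,v)$ centered at $p$ with $d\sigma^2=E\,du^2+2F\,du\,dv+G\,dv^2$ and $\delta=EG-F^2$, one has $\delta_{uu}\delta_{vv}-\delta_{uv}^2\neq0$ at $p$. *)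

theory Defs
  imports "HOL-Analysis.Analysis"
begin

text \<open>Local setting: the surface M is represented by an open coordinate domain
  U of R^2 = real \<times> real; the target R^3 is real \<times> real \<times> real.\<close>

type_synonym R2 = "real \<times> real"
type_synonym R3 = "real \<times> real \<times> real"

fun Ck_on :: "nat \<Rightarrow> 'a::euclidean_space set \<Rightarrow> ('a \<Rightarrow> 'b::real_normed_vector) \<Rightarrow> bool" where
  "Ck_on 0 U f = continuous_on U f"
| "Ck_on (Suc k) U f =
     (f differentiable_on U \<and> (\<forall>b\<in>Basis. Ck_on k U (\<lambda>x. frechet_derivative f (at x) b)))"

definition smooth_on :: "'a::euclidean_space set \<Rightarrow> ('a \<Rightarrow> 'b::real_normed_vector) \<Rightarrow> bool" where
  "smooth_on U f \<longleftrightarrow> (\<forall>k. Ck_on k U f)"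

definition diffeo_on :: "'a::euclidean_space set \<Rightarrow> ('a \<Rightarrow> 'a) \<Rightarrow> bool" where
  "diffeo_on V \<phi> \<longleftrightarrow> open V \<and> smooth_on V \<phi> \<and> inj_on \<phi> V \<and> open (\<phi> ` V)
      \<and> smooth_on (\<phi> ` V) (inv_into V \<phi>)"

definition cross_cap :: "R2 set \<Rightarrow> (R2 \<Rightarrow> R3) \<Rightarrow> R2 \<Rightarrow> bool" where
  "cross_cap U f p \<longleftrightarrow>
     (\<exists>V \<phi> W \<Phi>. (0::R2) \<in> V \<and> diffeo_on V \<phi> \<and> \<phi> 0 = p \<and> \<phi> ` V \<subseteq> U
        \<and> f p \<in> W \<and> diffeo_on W \<Phi> \<and> f ` (\<phi> ` V) \<subseteq> W
        \<and> (\<forall>u v. (u, v) \<in> V \<longrightarrow> \<Phi> (f (\<phi> (u, v))) = (u, u * v, v ^ 2)))"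

definition coefE :: "(R2 \<Rightarrow> R2 \<Rightarrow> R2 \<Rightarrow> real) \<Rightarrow> R2 \<Rightarrow> real" where
  "coefE g q = g q (1, 0) (1, 0)"
definition coefF :: "(R2 \<Rightarrow> R2 \<Rightarrow> R2 \<Rightarrow> real) \<Rightarrow> R2 \<Rightarrow> real" where
  "coefF g q = g q (1, 0) (0, 1)"
definition coefG :: "(R2 \<Rightarrow> R2 \<Rightarrow> R2 \<Rightarrow> real) \<Rightarrow> R2 \<Rightarrow> real" where
  "coefG g q = g q (0, 1) (0, 1)"

definition smooth_psd_metric :: "R2 set \<Rightarrow> (R2 \<Rightarrow> R2 \<Rightarrow> R2 \<Rightarrow> real) \<Rightarrow> bool" where
  "smooth_psd_metric U g \<longleftrightarrow> open U \<and>
     (\<forall>q\<in>U. bilinear (g q) \<and> (\<forall>v w. g q v w = g q w v) \<and> (\<forall>v. 0 \<le> g q v v))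
     \<and> smooth_on U (coefE g) \<and> smooth_on U (coefF g) \<and> smooth_on U (coefG g)"

definition singular_point :: "(R2 \<Rightarrow> R2 \<Rightarrow> R2 \<Rightarrow> real) \<Rightarrow> R2 \<Rightarrow> bool" where
  "singular_point g p \<longleftrightarrow> \<not> (\<forall>v. v \<noteq> 0 \<longrightarrow> g p v v > 0)"

definition null_space :: "(R2 \<Rightarrow> R2 \<Rightarrow> R2 \<Rightarrow> real) \<Rightarrow> R2 \<Rightarrow> R2 set" where
  "null_space g p = {v. \<forall>w. g p v w = 0}"

definition vf_deriv :: "(R2 \<Rightarrow> R2) \<Rightarrow> (R2 \<Rightarrow> real) \<Rightarrow> R2 \<Rightarrow> real" where
  "vf_deriv X h q = frechet_derivative h (at q) (X q)"

definition lie_bracket :: "(R2 \<Rightarrow> R2) \<Rightarrow> (R2 \<Rightarrow> R2) \<Rightarrow> R2 \<Rightarrow> R2" where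
  "lie_bracket X Y q = frechet_derivative Y (at q) (X q) - frechet_derivative X (at q) (Y q)"

definition metric_pair :: "(R2 \<Rightarrow> R2 \<Rightarrow> R2 \<Rightarrow> real) \<Rightarrow> (R2 \<Rightarrow> R2) \<Rightarrow> (R2 \<Rightarrow> R2) \<Rightarrow> R2 \<Rightarrow> real" where
  "metric_pair g X Y q = g q (X q) (Y q)"

definition kossowski :: "(R2 \<Rightarrow> R2 \<Rightarrow> R2 \<Rightarrow> real) \<Rightarrow> (R2 \<Rightarrow> R2) \<Rightarrow> (R2 \<Rightarrow> R2) \<Rightarrow> (R2 \<Rightarrow> R2) \<Rightarrow> R2 \<Rightarrow> real" where
  "kossowski g X Y Z q = (1/2) *
     ( vf_deriv X (metric_pair g Y Z) q + vf_deriv Y (metric_pair g X Z) q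
     - vf_deriv Z (metric_pair g X Y) q
     + g q (lie_bracket X Y q) (Z q) - g q (lie_bracket X Z q) (Y q)
     - g q (lie_bracket Y Z q) (X q))"

definition admissible_metric :: "R2 set \<Rightarrow> (R2 \<Rightarrow> R2 \<Rightarrow> R2 \<Rightarrow> real) \<Rightarrow> bool" where
  "admissible_metric U g \<longleftrightarrow> smooth_psd_metric U g \<and>
     (\<forall>p\<in>U. singular_point g p \<longrightarrow>
        (\<forall>W V1 V2 V3. open W \<and> p \<in> W \<and> W \<subseteq> U \<and>
            smooth_on W V1 \<and> smooth_on W V2 \<and> smooth_on W V3 \<and> V3 p \<in> null_space g p
            \<longrightarrow> kossowski g V1 V2 V3 p = 0))"

definition pderiv_dir :: "R2 \<Rightarrow> (R2 \<Rightarrow> real) \<Rightarrow> R2 \<Rightarrow> real" where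
  "pderiv_dir b h q = frechet_derivative h (at q) b"

definition metric_delta :: "(R2 \<Rightarrow> R2 \<Rightarrow> R2 \<Rightarrow> real) \<Rightarrow> R2 \<Rightarrow> real" where
  "metric_delta g q = coefE g q * coefG g q - (coefF g q)^2"

text \<open>Computed in the coordinates (u,v) of the chart U (translated to be centred at p;
  translation does not change second derivatives).\<close>
definition intrinsic_cross_cap :: "R2 set \<Rightarrow> (R2 \<Rightarrow> R2 \<Rightarrow> R2 \<Rightarrow> real) \<Rightarrow> R2 \<Rightarrow> bool" where
  "intrinsic_cross_cap U g p \<longleftrightarrow> admissible_metric U g \<and> p \<in> U \<and> singular_point g p \<and>
     (let d = metric_delta g;
          duu = pderiv_dir (1,0) (pderiv_dir (1,0) d) p;
          dvv = pderiv_dir (0,1) (pderiv_dir (0,1) d) p;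
          duv = pderiv_dir (0,1) (pderiv_dir (1,0) d) p
      in duu * dvv - duv^2 \<noteq> 0)"

definition first_fundamental_form :: "(R2 \<Rightarrow> R3) \<Rightarrow> R2 \<Rightarrow> R2 \<Rightarrow> R2 \<Rightarrow> real" where
  "first_fundamental_form f q v w = frechet_derivative f (at q) v \<bullet> frechet_derivative f (at q) w"

end

theory Submission
  imports Defs
begin


lemma Ck_on_Suc_imp: "Ck_on (Suc k) U f \<Longrightarrow> Ck_on k U f"
proof (induction k arbitrary: f)
  case 0
  then show ?case by (auto intro: differentiable_imp_continuous_on)
next
  case (Suc k)
  then show ?case by auto
qed

lemma Ck_on_le: "Ck_on k U f \<Longrightarrow> m \<le> k \<Longrightarrow> Ck_on m U f"
proof (induction k)
  case 0 then show ?case by simp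
next
  case (Suc k) then show ?case
    by (metis Ck_on_Suc_imp le_Suc_eq)
qed

lemma Ck_on_diff_at: "Ck_on (Suc k) U f \<Longrightarrow> open U \<Longrightarrow> q \<in> U \<Longrightarrow> f differentiable at q"
  by (simp add: differentiable_on_eq_differentiable_at)

lemma smooth_diff_at: "smooth_on U f \<Longrightarrow> open U \<Longrightarrow> q \<in> U \<Longrightarrow> f differentiable at q"
  unfolding smooth_on_def by (meson Ck_on_diff_at)

lemma smooth_partial: "smooth_on U f \<Longrightarrow> b \<in> Basis \<Longrightarrow> smooth_on U (\<lambda>x. frechet_derivative f (at x) b)"
  unfolding smooth_on_def by (metis Ck_on.simps(2))

lemma fd_eq_open:
  assumes "open U" "\<And>x. x \<in> U \<Longrightarrow> f x = g x" "q \<in> U" "f differentiable at q"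
  shows "frechet_derivative f (at q) = frechet_derivative g (at q)"
proof -
  have "(f has_derivative frechet_derivative f (at q)) (at q)"
    using assms(4) frechet_derivative_works by blast
  then have "(g has_derivative frechet_derivative f (at q)) (at q)"
    using has_derivative_transform_within_open assms by blast
  then show ?thesis by (rule frechet_derivative_at)
qed

lemma diff_on_cong:
  assumes "open U" "\<And>x. x \<in> U \<Longrightarrow> f x = g x" "f differentiable_on U"
  shows "g differentiable_on U"
  using assms unfolding differentiable_on_eq_differentiable_at[OF assms(1)] differentiable_def
  by (meson has_derivative_transform_within_open)

lemma Ck_on_cong:
  assumes "open U" "\<And>x. x \<in> U \<Longrightarrow> f x = g x" "Ck_on k U f"
  shows "Ck_on k U g"
  using assms
proof (induction k arbitrary: f g)
  case 0 then show ?case using continuous_on_cong by force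
next
  case (Suc k)
  have d: "g differentiable_on U"
    using Suc.prems by (meson Ck_on.simps(2) diff_on_cong)
  have fe: "\<And>x. x \<in> U \<Longrightarrow> frechet_derivative f (at x) = frechet_derivative g (at x)"
    using Suc.prems by (intro fd_eq_open) (auto simp: differentiable_on_eq_differentiable_at)
  have "Ck_on k U (\<lambda>x. frechet_derivative g (at x) b)" if b: "b \<in> Basis" for b
  proof (rule Suc.IH[of "\<lambda>x. frechet_derivative f (at x) b"])
    show "open U" by fact
    show "\<And>x. x \<in> U \<Longrightarrow> frechet_derivative f (at x) b = frechet_derivative g (at x) b" using fe by simp
    show "Ck_on k U (\<lambda>x. frechet_derivative f (at x) b)" using Suc.prems(3) b by simp
  qed
  then show ?case using d by simp
qed

lemma Ck_on_add:
  assumes "open U" "Ck_on k U a" "Ck_on k U b"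
  shows "Ck_on k U (\<lambda>x. a x + b x)"
  using assms
proof (induction k arbitrary: a b)
  case 0 then show ?case by (auto intro: continuous_on_add)
next
  case (Suc k)
  have da: "\<And>x. x \<in> U \<Longrightarrow> a differentiable at x" and db: "\<And>x. x \<in> U \<Longrightarrow> b differentiable at x"
    using Suc.prems by (auto simp: differentiable_on_eq_differentiable_at)
  have hd: "((\<lambda>x. a x + b x) has_derivative (\<lambda>h. frechet_derivative a (at x) h + frechet_derivative b (at x) h)) (at x)"
    if x: "x \<in> U" for x
    using da[OF x] db[OF x] by (intro has_derivative_add) (auto simp: frechet_derivative_works)
  have eq: "frechet_derivative (\<lambda>x. a x + b x) (at x) e =
      frechet_derivative a (at x) e + frechet_derivative b (at x) e" if x: "x \<in> U" for x e
    using frechet_derivative_at[OF hd[OF x], symmetric] by simp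
  have "(\<lambda>x. a x + b x) differentiable_on U"
    using hd Suc.prems(1) by (auto simp: differentiable_on_eq_differentiable_at differentiable_def)
  moreover have "Ck_on k U (\<lambda>x. frechet_derivative (\<lambda>x. a x + b x) (at x) e)" if e: "e \<in> Basis" for e
  proof -
    have 1: "Ck_on k U (\<lambda>x. frechet_derivative a (at x) e)" using Suc.prems(2) e by simp
    have 2: "Ck_on k U (\<lambda>x. frechet_derivative b (at x) e)" using Suc.prems(3) e by simp
    have "Ck_on k U (\<lambda>x. frechet_derivative a (at x) e + frechet_derivative b (at x) e)"
      by (rule Suc.IH[OF Suc.prems(1) 1 2])
    then show ?thesis
      by (rule Ck_on_cong[OF Suc.prems(1), rotated]) (simp add: eq)
  qed
  ultimately show ?case by simp
qed

lemma Ck_on_bilinear: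
  assumes B: "bounded_bilinear B" and "open U" "Ck_on k U a" "Ck_on k U b"
  shows "Ck_on k U (\<lambda>x. B (a x) (b x))"
  using assms(2-)
proof (induction k arbitrary: a b)
  case 0 then show ?case by (simp add: bounded_bilinear.continuous_on[OF B])
next
  case (Suc k)
  have da: "\<And>x. x \<in> U \<Longrightarrow> a differentiable at x" and db: "\<And>x. x \<in> U \<Longrightarrow> b differentiable at x"
    using Suc.prems by (auto simp: differentiable_on_eq_differentiable_at)
  have hd: "((\<lambda>x. B (a x) (b x)) has_derivative (\<lambda>h. B (a x) (frechet_derivative b (at x) h) + B (frechet_derivative a (at x) h) (b x))) (at x)"
    if x: "x \<in> U" for x
    using da[OF x] db[OF x] by (intro bounded_bilinear.FDERIV[OF B]) (auto simp: frechet_derivative_works)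
  have eq: "frechet_derivative (\<lambda>x. B (a x) (b x)) (at x) e =
      B (a x) (frechet_derivative b (at x) e) + B (frechet_derivative a (at x) e) (b x)" if x: "x \<in> U" for x e
    using frechet_derivative_at[OF hd[OF x], symmetric] by simp
  have "(\<lambda>x. B (a x) (b x)) differentiable_on U"
    using hd Suc.prems(1) by (auto simp: differentiable_on_eq_differentiable_at differentiable_def)
  moreover have "Ck_on k U (\<lambda>x. frechet_derivative (\<lambda>x. B (a x) (b x)) (at x) e)" if e: "e \<in> Basis" for e
  proof -
    have ak: "Ck_on k U a" "Ck_on k U b" using Suc.prems Ck_on_Suc_imp by blast+
    have 1: "Ck_on k U (\<lambda>x. frechet_derivative a (at x) e)" using Suc.prems(2) e by simp
    have 2: "Ck_on k U (\<lambda>x. frechet_derivative b (at x) e)" using Suc.prems(3) e by simp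
    have "Ck_on k U (\<lambda>x. B (a x) (frechet_derivative b (at x) e) + B (frechet_derivative a (at x) e) (b x))"
      by (rule Ck_on_add[OF Suc.prems(1) Suc.IH[OF Suc.prems(1) ak(1) 2] Suc.IH[OF Suc.prems(1) 1 ak(2)]])
    then show ?thesis
      by (rule Ck_on_cong[OF Suc.prems(1), rotated]) (simp add: eq)
  qed
  ultimately show ?case by simp
qed

lemma smooth_bilinear:
  assumes "bounded_bilinear B" "open U" "smooth_on U a" "smooth_on U b"
  shows "smooth_on U (\<lambda>x. B (a x) (b x))"
  using assms Ck_on_bilinear unfolding smooth_on_def by blast



lemma mvt_line:
  fixes g :: "'a::real_normed_vector \<Rightarrow> real"
  assumes seg: "\<And>s. s \<in> {0..1} \<Longrightarrow> p + s *\<^sub>R a \<in> U"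
    and dg: "\<And>x. x \<in> U \<Longrightarrow> (g has_derivative Dg x) (at x)"
  shows "\<exists>s\<in>{0<..<1}. g (p + a) - g p = Dg (p + s *\<^sub>R a) a"
proof -
  have "\<exists>s\<in>{0<..<1::real}. (\<lambda>s. g (p + s *\<^sub>R a)) 1 - (\<lambda>s. g (p + s *\<^sub>R a)) 0 = (\<lambda>s h. Dg (p + s *\<^sub>R a) (h *\<^sub>R a)) s (1 - 0)"
  proof (rule mvt_simple)
    fix s :: real assume "0 \<le> s" "s \<le> 1"
    then have "p + s *\<^sub>R a \<in> U" using seg by auto
    have l: "((\<lambda>s. p + s *\<^sub>R a) has_derivative (\<lambda>h. h *\<^sub>R a)) (at s within {0..1})"
      by (auto intro!: derivative_eq_intros)
    show "((\<lambda>s. g (p + s *\<^sub>R a)) has_derivative (\<lambda>h. Dg (p + s *\<^sub>R a) (h *\<^sub>R a))) (at s within {0..1})"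
      using has_derivative_compose[OF l dg[OF \<open>p + s *\<^sub>R a \<in> U\<close>]] .
  qed simp
  then show ?thesis by simp
qed

lemma mixed_mvt:
  fixes g h :: "'a::real_normed_vector \<Rightarrow> real"
  assumes seg: "\<And>s r. s \<in> {0..1} \<Longrightarrow> r \<in> {0..1} \<Longrightarrow> p + s *\<^sub>R a + r *\<^sub>R b \<in> U"
    and dg: "\<And>x. x \<in> U \<Longrightarrow> (g has_derivative Dg x) (at x)"
    and hdef: "\<And>x. x \<in> U \<Longrightarrow> h x = Dg x a"
    and dh: "\<And>x. x \<in> U \<Longrightarrow> (h has_derivative D2 x) (at x)"
  shows "\<exists>s\<in>{0<..<1}. \<exists>r\<in>{0<..<1}. g (p + a + b) - g (p + a) - g (p + b) + g p = D2 (p + s *\<^sub>R a + r *\<^sub>R b) b"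
proof -
  define \<phi> where "\<phi> x = g (x + b) - g x" for x
  have "\<exists>s\<in>{0<..<1}. \<phi> (p + a) - \<phi> p = (\<lambda>h. Dg (p + s *\<^sub>R a + b) h - Dg (p + s *\<^sub>R a) h) a"
  proof (rule mvt_line[where U = "{x. x \<in> U \<and> x + b \<in> U}"])
    fix s :: real assume "s \<in> {0..1}"
    then show "p + s *\<^sub>R a \<in> {x \<in> U. x + b \<in> U}" using seg[of s 0] seg[of s 1] by (auto simp: add.assoc)
  next
    fix x assume "x \<in> {x \<in> U. x + b \<in> U}"
    then have x: "x \<in> U" "x + b \<in> U" by auto
    have "((\<lambda>x. g (x + b)) has_derivative (\<lambda>h. Dg (x + b) h)) (at x)"
    proof -
      have "((\<lambda>x. x + b) has_derivative (\<lambda>h. h)) (at x)" by (auto intro!: derivative_eq_intros)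
      from has_derivative_compose[OF this dg[OF x(2)]] show ?thesis by simp
    qed
    then show "(\<phi> has_derivative (\<lambda>h. Dg (x + b) h - Dg x h)) (at x)"
      unfolding \<phi>_def using dg[OF x(1)] by (intro has_derivative_diff) auto
  qed
  then obtain s where s: "s \<in> {0<..<1}" and e1: "\<phi> (p + a) - \<phi> p = Dg (p + s *\<^sub>R a + b) a - Dg (p + s *\<^sub>R a) a"
    by auto
  have "\<exists>r\<in>{0<..<1}. h ((p + s *\<^sub>R a) + b) - h (p + s *\<^sub>R a) = D2 ((p + s *\<^sub>R a) + r *\<^sub>R b) b"
  proof (rule mvt_line[where U = U])
    fix r :: real assume "r \<in> {0..1}"
    then show "p + s *\<^sub>R a + r *\<^sub>R b \<in> U" using seg[of s r] s by auto
  qed (rule dh)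
  then obtain r where r: "r \<in> {0<..<1}" and e2: "h ((p + s *\<^sub>R a) + b) - h (p + s *\<^sub>R a) = D2 ((p + s *\<^sub>R a) + r *\<^sub>R b) b"
    by auto
  have "h ((p + s *\<^sub>R a) + b) = Dg (p + s *\<^sub>R a + b) a" using hdef seg[of s 1] s by auto
  moreover have "h (p + s *\<^sub>R a) = Dg (p + s *\<^sub>R a) a" using hdef seg[of s 0] s by auto
  ultimately have "g (p + a + b) - g (p + a) - g (p + b) + g p = D2 (p + s *\<^sub>R a + r *\<^sub>R b) b"
    using e1 e2 unfolding \<phi>_def by (auto simp: algebra_simps)
  then show ?thesis using s r by blast
qed

lemma mixed_quot:
  fixes g :: "R2 \<Rightarrow> real"
  assumes U: "ball p R \<subseteq> U" "open U" and t: "0 < t" "2*t < R" and uv: "norm u \<le> 1" "norm v \<le> 1"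
    and dg: "\<And>x. x \<in> U \<Longrightarrow> g differentiable at x"
    and d1: "\<And>x. x \<in> U \<Longrightarrow> (\<lambda>y. frechet_derivative g (at y) u) differentiable at x"
  shows "\<exists>\<xi>. dist \<xi> p < 2*t \<and> g (p + t *\<^sub>R u + t *\<^sub>R v) - g (p + t *\<^sub>R u) - g (p + t *\<^sub>R v) + g p
           = t * t * frechet_derivative (\<lambda>y. frechet_derivative g (at y) u) (at \<xi>) v"
proof -
  define G1 where "G1 y = frechet_derivative g (at y) u" for y
  have "\<exists>s\<in>{0<..<1}. \<exists>r\<in>{0<..<1}. g (p + t *\<^sub>R u + t *\<^sub>R v) - g (p + t *\<^sub>R u) - g (p + t *\<^sub>R v) + g p
     = (\<lambda>x k. t * frechet_derivative G1 (at x) k) (p + s *\<^sub>R (t *\<^sub>R u) + r *\<^sub>R (t *\<^sub>R v)) (t *\<^sub>R v)"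
  proof (rule mixed_mvt[where U=U and Dg = "\<lambda>x. frechet_derivative g (at x)" and h = "\<lambda>y. t * G1 y"])
    fix s r :: real assume sr: "s \<in> {0..1}" "r \<in> {0..1}"
    have "norm (s *\<^sub>R t *\<^sub>R u + r *\<^sub>R t *\<^sub>R v) \<le> norm (s *\<^sub>R t *\<^sub>R u) + norm (r *\<^sub>R t *\<^sub>R v)"
      by (rule norm_triangle_ineq)
    also have "\<dots> \<le> t + t"
    proof -
      have "norm (s *\<^sub>R t *\<^sub>R u) \<le> t" using sr t uv by (simp add: mult_le_one mult_le_cancel_left1 mult_mono)
      moreover have "norm (r *\<^sub>R t *\<^sub>R v) \<le> t" using sr t uv by (simp add: mult_le_one mult_le_cancel_left1 mult_mono)
      ultimately show ?thesis by simp
    qed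
    finally have "dist (p + s *\<^sub>R t *\<^sub>R u + r *\<^sub>R t *\<^sub>R v) p < R" using t by (simp add: dist_norm)
    then show "p + s *\<^sub>R (t *\<^sub>R u) + r *\<^sub>R (t *\<^sub>R v) \<in> U" using U by (auto simp: dist_commute)
  next
    fix x assume "x \<in> U"
    then show "(g has_derivative frechet_derivative g (at x)) (at x)" using dg frechet_derivative_works by blast
  next
    fix x assume x: "x \<in> U"
    have bl: "bounded_linear (frechet_derivative g (at x))"
      using dg[OF x] frechet_derivative_works has_derivative_bounded_linear by blast
    show "t * G1 x = frechet_derivative g (at x) (t *\<^sub>R u)"
      unfolding G1_def using linear_scale[OF bounded_linear.linear[OF bl]] by simp
  next
    fix x assume x: "x \<in> U"
    have "(G1 has_derivative frechet_derivative G1 (at x)) (at x)"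
      using d1[OF x] frechet_derivative_works unfolding G1_def by blast
    then show "((\<lambda>y. t * G1 y) has_derivative (\<lambda>k. t * frechet_derivative G1 (at x) k)) (at x)"
      by (rule has_derivative_mult_right)
  qed
  then obtain s r where sr: "s \<in> {0<..<1}" "r \<in> {0<..<1}" and
    e: "g (p + t *\<^sub>R u + t *\<^sub>R v) - g (p + t *\<^sub>R u) - g (p + t *\<^sub>R v) + g p
     = t * frechet_derivative G1 (at (p + s *\<^sub>R (t *\<^sub>R u) + r *\<^sub>R (t *\<^sub>R v))) (t *\<^sub>R v)" by auto
  define \<xi> where "\<xi> = p + s *\<^sub>R (t *\<^sub>R u) + r *\<^sub>R (t *\<^sub>R v)"
  have "norm (s *\<^sub>R t *\<^sub>R u + r *\<^sub>R t *\<^sub>R v) \<le> norm (s *\<^sub>R t *\<^sub>R u) + norm (r *\<^sub>R t *\<^sub>R v)"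
    by (rule norm_triangle_ineq)
  also have "\<dots> < t + t"
  proof -
    have "norm (s *\<^sub>R t *\<^sub>R u) < t" using sr t uv
      by (auto simp: abs_mult) (smt (verit, best) mult_le_cancel_left1 mult_less_cancel_right2 mult_nonneg_nonneg)
    moreover have "norm (r *\<^sub>R t *\<^sub>R v) < t" using sr t uv
      by (auto simp: abs_mult) (smt (verit, best) mult_le_cancel_left1 mult_less_cancel_right2 mult_nonneg_nonneg)
    ultimately show ?thesis by simp
  qed
  finally have d: "dist \<xi> p < 2 * t" by (simp add: dist_norm \<xi>_def)
  then have "\<xi> \<in> U" using U t by (auto simp: dist_commute)
  then have bl: "bounded_linear (frechet_derivative G1 (at \<xi>))"
    using d1 frechet_derivative_works has_derivative_bounded_linear unfolding G1_def by blast
  have "frechet_derivative G1 (at \<xi>) (t *\<^sub>R v) = t * frechet_derivative G1 (at \<xi>) v"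
    using linear_scale[OF bounded_linear.linear[OF bl]] by simp
  then show ?thesis using e d unfolding \<xi>_def G1_def by (intro exI[of _ \<xi>]) (auto simp: \<xi>_def)
qed

lemma schwarz_real:
  fixes g :: "R2 \<Rightarrow> real"
  assumes U: "open U" "p \<in> U"
    and dg: "\<And>x. x \<in> U \<Longrightarrow> g differentiable at x"
    and d1: "\<And>x. x \<in> U \<Longrightarrow> (\<lambda>y. frechet_derivative g (at y) (1,0)) differentiable at x"
    and d2: "\<And>x. x \<in> U \<Longrightarrow> (\<lambda>y. frechet_derivative g (at y) (0,1)) differentiable at x"
    and c1: "continuous (at p) (\<lambda>x. frechet_derivative (\<lambda>y. frechet_derivative g (at y) (1,0)) (at x) (0,1))"
    and c2: "continuous (at p) (\<lambda>x. frechet_derivative (\<lambda>y. frechet_derivative g (at y) (0,1)) (at x) (1,0))"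
  shows "frechet_derivative (\<lambda>y. frechet_derivative g (at y) (1,0)) (at p) (0,1)
       = frechet_derivative (\<lambda>y. frechet_derivative g (at y) (0,1)) (at p) (1,0)"
proof (rule ccontr)
  define A where "A x = frechet_derivative (\<lambda>y. frechet_derivative g (at y) (1,0)) (at x) (0,1)" for x
  define B where "B x = frechet_derivative (\<lambda>y. frechet_derivative g (at y) (0,1)) (at x) (1,0)" for x
  assume "\<not> ?thesis"
  then have ne: "A p \<noteq> B p" unfolding A_def B_def .
  define e where "e = \<bar>A p - B p\<bar> / 2"
  have e: "e > 0" using ne by (simp add: e_def)
  obtain d1' where d1': "d1' > 0" "\<And>x. dist x p < d1' \<Longrightarrow> dist (A x) (A p) < e"
    using c1 e unfolding continuous_at_eps_delta A_def by blast
  obtain d2' where d2': "d2' > 0" "\<And>x. dist x p < d2' \<Longrightarrow> dist (B x) (B p) < e"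
    using c2 e unfolding continuous_at_eps_delta B_def by blast
  obtain R where R: "R > 0" "ball p R \<subseteq> U" using U open_contains_ball by blast
  define t where "t = Min {R, d1', d2'} / 4"
  have t: "0 < t" "2 * t < R" "2 * t < d1'" "2 * t < d2'" using R d1' d2' by (auto simp: t_def)
  have n1: "norm ((1::real), (0::real)) \<le> 1" and n2: "norm ((0::real), (1::real)) \<le> 1" by (simp_all add: norm_Pair)
  obtain \<xi> where \<xi>: "dist \<xi> p < 2*t" and e1: "g (p + t *\<^sub>R (1,0) + t *\<^sub>R (0,1)) - g (p + t *\<^sub>R (1,0)) - g (p + t *\<^sub>R (0,1)) + g p = t * t * A \<xi>"
    using mixed_quot[OF R(2) U(1) t(1,2) n1 n2 dg d1] unfolding A_def by blast
  obtain \<eta> where \<eta>: "dist \<eta> p < 2*t" and e2: "g (p + t *\<^sub>R (0,1) + t *\<^sub>R (1,0)) - g (p + t *\<^sub>R (0,1)) - g (p + t *\<^sub>R (1,0)) + g p = t * t * B \<eta>"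
    using mixed_quot[OF R(2) U(1) t(1,2) n2 n1 dg d2] unfolding B_def by blast
  have "p + t *\<^sub>R (1,0) + t *\<^sub>R (0,1) = p + t *\<^sub>R (0,1) + t *\<^sub>R ((1::real),(0::real))" by (simp add: algebra_simps)
  then have "t * t * A \<xi> = t * t * B \<eta>" using e1 e2 by (simp add: algebra_simps)
  then have AB: "A \<xi> = B \<eta>" using t by simp
  have "dist (A \<xi>) (A p) < e" using d1' \<xi> t by simp
  moreover have "dist (B \<eta>) (B p) < e" using d2' \<eta> t by simp
  ultimately show False using AB unfolding e_def dist_real_def by (simp add: abs_if split: if_splits)
qed

lemma fd_inner_const:
  assumes "f differentiable at y"
  shows "frechet_derivative (\<lambda>y. f y \<bullet> c) (at y) v = frechet_derivative f (at y) v \<bullet> c"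
proof -
  have "((\<lambda>y. f y \<bullet> c) has_derivative (\<lambda>v. frechet_derivative f (at y) v \<bullet> c)) (at y)"
    using assms frechet_derivative_works by (blast intro: has_derivative_inner_left)
  then show ?thesis using frechet_derivative_at by metis
qed

lemma diff_at_cong:
  assumes "open U" "x \<in> U" "\<And>y. y \<in> U \<Longrightarrow> f y = g y" "f differentiable at x"
  shows "g differentiable at x"
  using assms unfolding differentiable_def by (meson has_derivative_transform_within_open)

lemma schwarz_smooth:
  fixes f :: "R2 \<Rightarrow> R3"
  assumes U: "open U" "p \<in> U" and f: "smooth_on U f"
  shows "frechet_derivative (\<lambda>y. frechet_derivative f (at y) (1,0)) (at p) (0,1)
       = frechet_derivative (\<lambda>y. frechet_derivative f (at y) (0,1)) (at p) (1,0)"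
proof -
  define F1 where "F1 y = frechet_derivative f (at y) (1,0)" for y
  define F2 where "F2 y = frechet_derivative f (at y) (0,1)" for y
  have b1: "(1::real,0::real) \<in> Basis" and b2: "(0::real,1::real) \<in> Basis" by (simp_all add: Basis_prod_def)
  have sF1: "smooth_on U F1" using smooth_partial[OF f b1] unfolding F1_def .
  have sF2: "smooth_on U F2" using smooth_partial[OF f b2] unfolding F2_def .
  have sA: "smooth_on U (\<lambda>x. frechet_derivative F1 (at x) (0,1))" using smooth_partial[OF sF1 b2] .
  have sB: "smooth_on U (\<lambda>x. frechet_derivative F2 (at x) (1,0))" using smooth_partial[OF sF2 b1] .
  have cA: "continuous_on U (\<lambda>x. frechet_derivative F1 (at x) (0,1))" using sA unfolding smooth_on_def by (metis Ck_on.simps(1))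
  have cB: "continuous_on U (\<lambda>x. frechet_derivative F2 (at x) (1,0))" using sB unfolding smooth_on_def by (metis Ck_on.simps(1))
  have df: "\<And>x. x \<in> U \<Longrightarrow> f differentiable at x" using smooth_diff_at[OF f U(1)] .
  have dF1: "\<And>x. x \<in> U \<Longrightarrow> F1 differentiable at x" using smooth_diff_at[OF sF1 U(1)] .
  have dF2: "\<And>x. x \<in> U \<Longrightarrow> F2 differentiable at x" using smooth_diff_at[OF sF2 U(1)] .
  have key: "frechet_derivative F1 (at p) (0,1) \<bullet> c = frechet_derivative F2 (at p) (1,0) \<bullet> c" for c
  proof -
    define g where "g y = f y \<bullet> c" for y
    have g1: "frechet_derivative g (at y) (1,0) = F1 y \<bullet> c" if "y \<in> U" for y
      unfolding g_def F1_def using fd_inner_const[OF df[OF that]] .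
    have g2: "frechet_derivative g (at y) (0,1) = F2 y \<bullet> c" if "y \<in> U" for y
      unfolding g_def F2_def using fd_inner_const[OF df[OF that]] .
    have di1: "(\<lambda>y. F1 y \<bullet> c) differentiable at x" if "x \<in> U" for x using dF1[OF that] by simp
    have di2: "(\<lambda>y. F2 y \<bullet> c) differentiable at x" if "x \<in> U" for x using dF2[OF that] by simp
    have e1: "frechet_derivative (\<lambda>y. F1 y \<bullet> c) (at x) = frechet_derivative (\<lambda>y. frechet_derivative g (at y) (1,0)) (at x)"
      if "x \<in> U" for x
      by (rule fd_eq_open[OF U(1) _ that di1[OF that]]) (simp add: g1)
    have e2: "frechet_derivative (\<lambda>y. F2 y \<bullet> c) (at x) = frechet_derivative (\<lambda>y. frechet_derivative g (at y) (0,1)) (at x)"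
      if "x \<in> U" for x
      by (rule fd_eq_open[OF U(1) _ that di2[OF that]]) (simp add: g2)
    have A: "frechet_derivative (\<lambda>y. frechet_derivative g (at y) (1,0)) (at x) (0,1) = frechet_derivative F1 (at x) (0,1) \<bullet> c"
      if "x \<in> U" for x unfolding e1[OF that, symmetric] by (rule fd_inner_const[OF dF1[OF that]])
    have B: "frechet_derivative (\<lambda>y. frechet_derivative g (at y) (0,1)) (at x) (1,0) = frechet_derivative F2 (at x) (1,0) \<bullet> c"
      if "x \<in> U" for x unfolding e2[OF that, symmetric] by (rule fd_inner_const[OF dF2[OF that]])
    have "frechet_derivative (\<lambda>y. frechet_derivative g (at y) (1,0)) (at p) (0,1)
       = frechet_derivative (\<lambda>y. frechet_derivative g (at y) (0,1)) (at p) (1,0)"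
    proof (rule schwarz_real[OF U])
      show "g differentiable at x" if "x \<in> U" for x using df[OF that] unfolding g_def by simp
      show "(\<lambda>y. frechet_derivative g (at y) (1,0)) differentiable at x" if "x \<in> U" for x
        using diff_at_cong[OF U(1) that _ di1[OF that], of "\<lambda>y. frechet_derivative g (at y) (1,0)"] g1 by simp
      show "(\<lambda>y. frechet_derivative g (at y) (0,1)) differentiable at x" if "x \<in> U" for x
        using diff_at_cong[OF U(1) that _ di2[OF that], of "\<lambda>y. frechet_derivative g (at y) (0,1)"] g2 by simp
      have "continuous_on U (\<lambda>x. frechet_derivative F1 (at x) (0,1) \<bullet> c)"
        using cA by (intro continuous_intros)
      then have "continuous_on U (\<lambda>x. frechet_derivative (\<lambda>y. frechet_derivative g (at y) (1,0)) (at x) (0,1))"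
        by (rule continuous_on_eq) (auto simp: A)
      then show "continuous (at p) (\<lambda>x. frechet_derivative (\<lambda>y. frechet_derivative g (at y) (1,0)) (at x) (0,1))"
        using continuous_on_eq_continuous_at[OF U(1)] U(2) by blast
      have "continuous_on U (\<lambda>x. frechet_derivative F2 (at x) (1,0) \<bullet> c)"
        using cB by (intro continuous_intros)
      then have "continuous_on U (\<lambda>x. frechet_derivative (\<lambda>y. frechet_derivative g (at y) (0,1)) (at x) (1,0))"
        by (rule continuous_on_eq) (auto simp: B)
      then show "continuous (at p) (\<lambda>x. frechet_derivative (\<lambda>y. frechet_derivative g (at y) (0,1)) (at x) (1,0))"
        using continuous_on_eq_continuous_at[OF U(1)] U(2) by blast
    qed
    then show ?thesis using A[OF U(2)] B[OF U(2)] by simp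
  qed
  define d where "d = frechet_derivative F1 (at p) (0,1) - frechet_derivative F2 (at p) (1,0)"
  have "d \<bullet> d = 0" using key[of d] unfolding d_def inner_diff_left by simp
  then have "d = 0" by simp
  then show ?thesis unfolding F1_def F2_def d_def by simp
qed



lemma lin_R2:
  fixes T :: "R2 \<Rightarrow> 'b::real_vector"
  assumes "linear T"
  shows "T z = fst z *\<^sub>R T (1,0) + snd z *\<^sub>R T (0,1)"
proof -
  have "z = fst z *\<^sub>R (1,0) + snd z *\<^sub>R (0,1)" by (cases z) simp
  then have "T z = T (fst z *\<^sub>R (1,0) + snd z *\<^sub>R (0,1))" by simp
  also have "\<dots> = fst z *\<^sub>R T (1,0) + snd z *\<^sub>R T (0,1)"
    by (simp only: linear_add[OF assms] linear_scale[OF assms])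
  finally show ?thesis .
qed

lemma fd_linear: "f differentiable at x \<Longrightarrow> linear (frechet_derivative f (at x))"
  by (rule linear_frechet_derivative)

lemma koss_alg:
  fixes L :: "R2 \<Rightarrow> R3"
  assumes L: "linear L" and Lz: "L z = 0" and s1: "Hs x z = Hs z x" and s2: "Hs y z = Hs z y"
  shows "(1/2) * ( ((L a1 + Hs x y) \<bullet> L z + L y \<bullet> (L a2 + Hs x z))
                 + ((L a3 + Hs y x) \<bullet> L z + L x \<bullet> (L a4 + Hs y z))
                 - ((L a5 + Hs z x) \<bullet> L y + L x \<bullet> (L a6 + Hs z y))
                 + L (a1 - a3) \<bullet> L z - L (a2 - a5) \<bullet> L y - L (a4 - a6) \<bullet> L x) = 0"
  using Lz s1 s2 by (simp add: linear_diff[OF L] inner_add_left inner_add_right inner_diff_left inner_diff_right inner_commute)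

definition Hs :: "(R2 \<Rightarrow> R3) \<Rightarrow> R2 \<Rightarrow> R2 \<Rightarrow> R2 \<Rightarrow> R3" where
  "Hs f p k z = fst z *\<^sub>R frechet_derivative (\<lambda>q. frechet_derivative f (at q) (1,0)) (at p) k
              + snd z *\<^sub>R frechet_derivative (\<lambda>q. frechet_derivative f (at q) (0,1)) (at p) k"

lemma Hs_sym:
  assumes U: "open U" "p \<in> U" and f: "smooth_on U f"
  shows "Hs f p k z = Hs f p z k"
proof -
  define Fu where "Fu = frechet_derivative (\<lambda>q. frechet_derivative f (at q) (1,0)) (at p)"
  define Fv where "Fv = frechet_derivative (\<lambda>q. frechet_derivative f (at q) (0,1)) (at p)"
  have b1: "(1::real,0::real) \<in> Basis" and b2: "(0::real,1::real) \<in> Basis" by (simp_all add: Basis_prod_def)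
  have lu: "linear Fu" unfolding Fu_def
    by (rule fd_linear, rule smooth_diff_at[OF smooth_partial[OF f b1] U])
  have lv: "linear Fv" unfolding Fv_def
    by (rule fd_linear, rule smooth_diff_at[OF smooth_partial[OF f b2] U])
  have sw: "Fu (0,1) = Fv (1,0)" unfolding Fu_def Fv_def by (rule schwarz_smooth[OF U f])
  show ?thesis unfolding Hs_def Fu_def[symmetric] Fv_def[symmetric]
    by (simp add: lin_R2[OF lu, of k] lin_R2[OF lu, of z] lin_R2[OF lv, of k] lin_R2[OF lv, of z] sw algebra_simps)
qed

lemma h_deriv:
  assumes U: "open U" "p \<in> U" and f: "smooth_on U f" and Y: "Y differentiable at p"
  shows "((\<lambda>q. frechet_derivative f (at q) (Y q)) has_derivative
          (\<lambda>k. frechet_derivative f (at p) (frechet_derivative Y (at p) k) + Hs f p k (Y p))) (at p)"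
proof -
  define fu where "fu q = frechet_derivative f (at q) (1,0)" for q
  define fv where "fv q = frechet_derivative f (at q) (0,1)" for q
  have b1: "(1::real,0::real) \<in> Basis" and b2: "(0::real,1::real) \<in> Basis" by (simp_all add: Basis_prod_def)
  have du: "(fu has_derivative frechet_derivative fu (at p)) (at p)"
    using smooth_diff_at[OF smooth_partial[OF f b1] U] frechet_derivative_works unfolding fu_def by blast
  have dv: "(fv has_derivative frechet_derivative fv (at p)) (at p)"
    using smooth_diff_at[OF smooth_partial[OF f b2] U] frechet_derivative_works unfolding fv_def by blast
  have dY: "(Y has_derivative frechet_derivative Y (at p)) (at p)"
    using Y frechet_derivative_works by blast
  have E: "((\<lambda>q. fst (Y q) *\<^sub>R fu q + snd (Y q) *\<^sub>R fv q) has_derivative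
     (\<lambda>k. (fst (Y p) *\<^sub>R frechet_derivative fu (at p) k + fst (frechet_derivative Y (at p) k) *\<^sub>R fu p)
        + (snd (Y p) *\<^sub>R frechet_derivative fv (at p) k + snd (frechet_derivative Y (at p) k) *\<^sub>R fv p))) (at p)"
    by (intro has_derivative_add has_derivative_scaleR has_derivative_fst has_derivative_snd du dv dY)
  have eqU: "fst (Y q) *\<^sub>R fu q + snd (Y q) *\<^sub>R fv q = frechet_derivative f (at q) (Y q)" if "q \<in> U" for q
    unfolding fu_def fv_def
    using lin_R2[OF fd_linear[OF smooth_diff_at[OF f U(1) that]], of "Y q"] by simp
  have E2: "((\<lambda>q. frechet_derivative f (at q) (Y q)) has_derivative
     (\<lambda>k. (fst (Y p) *\<^sub>R frechet_derivative fu (at p) k + fst (frechet_derivative Y (at p) k) *\<^sub>R fu p)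
        + (snd (Y p) *\<^sub>R frechet_derivative fv (at p) k + snd (frechet_derivative Y (at p) k) *\<^sub>R fv p))) (at p)"
    by (rule has_derivative_transform_within_open[OF E U]) (simp add: eqU)
  have "(\<lambda>k. (fst (Y p) *\<^sub>R frechet_derivative fu (at p) k + fst (frechet_derivative Y (at p) k) *\<^sub>R fu p)
        + (snd (Y p) *\<^sub>R frechet_derivative fv (at p) k + snd (frechet_derivative Y (at p) k) *\<^sub>R fv p))
      = (\<lambda>k. frechet_derivative f (at p) (frechet_derivative Y (at p) k) + Hs f p k (Y p))"
  proof
    fix k
    show "(fst (Y p) *\<^sub>R frechet_derivative fu (at p) k + fst (frechet_derivative Y (at p) k) *\<^sub>R fu p)
        + (snd (Y p) *\<^sub>R frechet_derivative fv (at p) k + snd (frechet_derivative Y (at p) k) *\<^sub>R fv p)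
      = frechet_derivative f (at p) (frechet_derivative Y (at p) k) + Hs f p k (Y p)"
      unfolding Hs_def fu_def fv_def
      using lin_R2[OF fd_linear[OF smooth_diff_at[OF f U]], of "frechet_derivative Y (at p) k"]
      by (simp add: algebra_simps)
  qed
  then show ?thesis using E2 by simp
qed

lemma mp_deriv:
  assumes U: "open U" "p \<in> U" and f: "smooth_on U f" and Y: "Y differentiable at p" and Z: "Z differentiable at p"
  shows "frechet_derivative (metric_pair (first_fundamental_form f) Y Z) (at p) k
    = frechet_derivative f (at p) (Y p) \<bullet> (frechet_derivative f (at p) (frechet_derivative Z (at p) k) + Hs f p k (Z p))
    + (frechet_derivative f (at p) (frechet_derivative Y (at p) k) + Hs f p k (Y p)) \<bullet> frechet_derivative f (at p) (Z p)"
proof -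
  have e: "metric_pair (first_fundamental_form f) Y Z = (\<lambda>q. frechet_derivative f (at q) (Y q) \<bullet> frechet_derivative f (at q) (Z q))"
    by (simp add: fun_eq_iff metric_pair_def first_fundamental_form_def)
  have "((\<lambda>q. frechet_derivative f (at q) (Y q) \<bullet> frechet_derivative f (at q) (Z q)) has_derivative
     (\<lambda>k. frechet_derivative f (at p) (Y p) \<bullet> (frechet_derivative f (at p) (frechet_derivative Z (at p) k) + Hs f p k (Z p))
        + (frechet_derivative f (at p) (frechet_derivative Y (at p) k) + Hs f p k (Y p)) \<bullet> frechet_derivative f (at p) (Z p))) (at p)"
    by (rule has_derivative_inner[OF h_deriv[OF U f Y] h_deriv[OF U f Z]])
  from frechet_derivative_at[OF this, symmetric] show ?thesis unfolding e by simp
qed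

lemma psd_fff:
  assumes U: "open U" and f: "smooth_on U f"
  shows "smooth_psd_metric U (first_fundamental_form f)"
proof -
  have b1: "(1::real,0::real) \<in> Basis" and b2: "(0::real,1::real) \<in> Basis" by (simp_all add: Basis_prod_def)
  have bil: "bilinear (first_fundamental_form f q)" if q: "q \<in> U" for q
  proof -
    have bl: "bounded_linear (frechet_derivative f (at q))"
      using smooth_diff_at[OF f U q] frechet_derivative_works has_derivative_bounded_linear by blast
    have l1: "linear (\<lambda>w. frechet_derivative f (at q) v \<bullet> frechet_derivative f (at q) w)" for v
      by (rule bounded_linear.linear, rule bounded_linear_compose[OF bounded_linear_inner_right bl])
    have l2: "linear (\<lambda>v. frechet_derivative f (at q) v \<bullet> frechet_derivative f (at q) w)" for w
      by (rule bounded_linear.linear, rule bounded_linear_compose[OF bounded_linear_inner_left bl])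
    show ?thesis unfolding bilinear_def first_fundamental_form_def using l1 l2 by simp
  qed
  have sE: "smooth_on U (coefE (first_fundamental_form f))"
    unfolding coefE_def first_fundamental_form_def
    by (rule smooth_bilinear[OF bounded_bilinear_inner U smooth_partial[OF f b1] smooth_partial[OF f b1]])
  have sF: "smooth_on U (coefF (first_fundamental_form f))"
    unfolding coefF_def first_fundamental_form_def
    by (rule smooth_bilinear[OF bounded_bilinear_inner U smooth_partial[OF f b1] smooth_partial[OF f b2]])
  have sG: "smooth_on U (coefG (first_fundamental_form f))"
    unfolding coefG_def first_fundamental_form_def
    by (rule smooth_bilinear[OF bounded_bilinear_inner U smooth_partial[OF f b2] smooth_partial[OF f b2]])
  have sym: "first_fundamental_form f q v w = first_fundamental_form f q w v" for q v w
    unfolding first_fundamental_form_def by (rule inner_commute)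
  have pos: "0 \<le> first_fundamental_form f q v v" for q v
    unfolding first_fundamental_form_def by simp
  show ?thesis unfolding smooth_psd_metric_def using U bil sE sF sG sym pos by blast
qed

lemma admissible_fff:
  assumes U: "open U" and f: "smooth_on U f"
  shows "admissible_metric U (first_fundamental_form f)"
  unfolding admissible_metric_def
proof (intro conjI psd_fff[OF U f] ballI impI allI)
  fix p :: R2 and W :: "R2 set" and V1 V2 V3 :: "R2 \<Rightarrow> R2"
  assume p: "p \<in> U" and W: "open W \<and> p \<in> W \<and> W \<subseteq> U \<and> smooth_on W V1 \<and> smooth_on W V2 \<and> smooth_on W V3 \<and>
        V3 p \<in> null_space (first_fundamental_form f) p"
  define L where "L = frechet_derivative f (at p)"
  have L: "linear L" unfolding L_def by (rule fd_linear[OF smooth_diff_at[OF f U p]])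
  have d1: "V1 differentiable at p" using W by (intro smooth_diff_at[of W V1 p]) auto
  have d2: "V2 differentiable at p" using W by (intro smooth_diff_at[of W V2 p]) auto
  have d3: "V3 differentiable at p" using W by (intro smooth_diff_at[of W V3 p]) auto
  have "L (V3 p) \<bullet> L (V3 p) = 0" using W unfolding null_space_def first_fundamental_form_def L_def by blast
  then have Lz: "L (V3 p) = 0" by simp
  have s1: "Hs f p (V1 p) (V3 p) = Hs f p (V3 p) (V1 p)" by (rule Hs_sym[OF U p f])
  have s2: "Hs f p (V2 p) (V3 p) = Hs f p (V3 p) (V2 p)" by (rule Hs_sym[OF U p f])
  show "kossowski (first_fundamental_form f) V1 V2 V3 p = 0"
    unfolding kossowski_def vf_deriv_def lie_bracket_def
    unfolding mp_deriv[OF U p f d1 d2] mp_deriv[OF U p f d1 d3] mp_deriv[OF U p f d2 d3] mp_deriv[OF U p f d2 d1]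
      mp_deriv[OF U p f d3 d1] mp_deriv[OF U p f d3 d2]
    unfolding L_def[symmetric] first_fundamental_form_def
    using Lz s1 s2 by (simp add: linear_diff[OF L] inner_add_left inner_add_right inner_diff_left inner_diff_right inner_commute)
qed



definition cross3 :: "R3 \<Rightarrow> R3 \<Rightarrow> R3" where
  "cross3 a b = (fst (snd a) * snd (snd b) - snd (snd a) * fst (snd b),
                 snd (snd a) * fst b - fst a * snd (snd b),
                 fst a * fst (snd b) - fst (snd a) * fst b)"

lemma inner_R3: "(a::R3) \<bullet> b = fst a * fst b + fst (snd a) * fst (snd b) + snd (snd a) * snd (snd b)"
  by (simp add: inner_prod_def add.assoc)

lemma lagrange: "(a \<bullet> a) * (b \<bullet> b) - (a \<bullet> b)^2 = cross3 a b \<bullet> cross3 a b"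
  unfolding inner_R3 cross3_def by (simp add: power2_eq_square algebra_simps)

lemma bilinear_cross3: "bilinear cross3"
  unfolding bilinear_def
proof (intro conjI allI)
  fix x y :: R3
  show "linear (cross3 x)" by (rule linearI) (auto simp: cross3_def algebra_simps)
  show "linear (\<lambda>x. cross3 x y)" by (rule linearI) (auto simp: cross3_def algebra_simps)
qed

lemma bounded_bilinear_cross3: "bounded_bilinear cross3"
  using bilinear_cross3 bilinear_conv_bounded_bilinear by blast

lemma lin_R3:
  fixes T :: "R3 \<Rightarrow> 'b::real_vector"
  assumes "linear T"
  shows "T y = fst y *\<^sub>R T (1,0,0) + fst (snd y) *\<^sub>R T (0,1,0) + snd (snd y) *\<^sub>R T (0,0,1)"
proof -
  have "y = fst y *\<^sub>R (1,0,0) + fst (snd y) *\<^sub>R (0,1,0) + snd (snd y) *\<^sub>R (0,0,1)" by (cases y) simp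
  then have "T y = T (fst y *\<^sub>R (1,0,0) + fst (snd y) *\<^sub>R (0,1,0) + snd (snd y) *\<^sub>R (0,0,1))" by simp
  also have "\<dots> = fst y *\<^sub>R T (1,0,0) + fst (snd y) *\<^sub>R T (0,1,0) + snd (snd y) *\<^sub>R T (0,0,1)"
    by (simp only: linear_add[OF assms] linear_scale[OF assms])
  finally show ?thesis .
qed

definition Kc :: "R3 \<Rightarrow> R3 \<Rightarrow> R3 \<Rightarrow> R3 \<Rightarrow> R3" where
  "Kc c1 c2 c3 y = fst y *\<^sub>R cross3 c2 c3 + fst (snd y) *\<^sub>R cross3 c3 c1 + snd (snd y) *\<^sub>R cross3 c1 c2"

lemma cross_lin_image:
  assumes "linear P"
  shows "cross3 (P a) (P b) = Kc (P (1,0,0)) (P (0,1,0)) (P (0,0,1)) (cross3 a b)"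
proof -
  obtain x1 y1 z1 where c1: "P (1,0,0) = (x1,y1,z1)" by (metis prod.exhaust)
  obtain x2 y2 z2 where c2: "P (0,1,0) = (x2,y2,z2)" by (metis prod.exhaust)
  obtain x3 y3 z3 where c3: "P (0,0,1) = (x3,y3,z3)" by (metis prod.exhaust)
  obtain a1 a2 a3 where a: "a = (a1,a2,a3)" by (metis prod.exhaust)
  obtain b1 b2 b3 where b: "b = (b1,b2,b3)" by (metis prod.exhaust)
  have Pa: "P a = a1 *\<^sub>R (x1,y1,z1) + a2 *\<^sub>R (x2,y2,z2) + a3 *\<^sub>R (x3,y3,z3)"
    using lin_R3[OF assms, of a] unfolding c1 c2 c3 a by simp
  have Pb: "P b = b1 *\<^sub>R (x1,y1,z1) + b2 *\<^sub>R (x2,y2,z2) + b3 *\<^sub>R (x3,y3,z3)"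
    using lin_R3[OF assms, of b] unfolding c1 c2 c3 b by simp
  show ?thesis
    unfolding Pa Pb unfolding c1 c2 c3 Kc_def cross3_def a b
    by (simp add: algebra_simps)
qed

lemma cross_DN:
  fixes a b c d u v :: real
  shows "cross3 (a, v * a + u * b, 2 * v * b) (c, v * c + u * d, 2 * v * d) = (a * d - b * c) *\<^sub>R (2 * v ^ 2, - 2 * v, u)"
  unfolding cross3_def by (simp add: power2_eq_square algebra_simps)

lemma cross_dep:
  assumes "a1 *\<^sub>R x + a2 *\<^sub>R y = 0" "(a1, a2) \<noteq> (0::real, 0::real)"
  shows "cross3 x y = 0"
proof -
  obtain x1 x2 x3 where x: "x = (x1,x2,x3)" by (metis prod.exhaust)
  obtain y1 y2 y3 where y: "y = (y1,y2,y3)" by (metis prod.exhaust)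
  have e: "a1 * x1 + a2 * y1 = 0" "a1 * x2 + a2 * y2 = 0" "a1 * x3 + a2 * y3 = 0"
    using assms(1) unfolding x y by (auto simp: zero_prod_def)
  show ?thesis
  proof (cases "a1 = 0")
    case True
    then have "a2 \<noteq> 0" using assms(2) by auto
    then have "y1 = 0" "y2 = 0" "y3 = 0" using e True by auto
    then show ?thesis unfolding x y cross3_def by (simp add: zero_prod_def)
  next
    case False
    then have "x1 = - a2 * y1 / a1" "x2 = - a2 * y2 / a1" "x3 = - a2 * y3 / a1"
      using e by (auto simp: field_simps)
    then show ?thesis unfolding x y cross3_def by (simp add: field_simps zero_prod_def)
  qed
qed



definition Nmap :: "R2 \<Rightarrow> R3" where "Nmap x = (fst x, fst x * snd x, snd x ^ 2)"
definition DNmap :: "R2 \<Rightarrow> R2 \<Rightarrow> R3" where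
  "DNmap x k = (fst k, snd x * fst k + fst x * snd k, 2 * snd x * snd k)"

lemma Nmap_deriv: "(Nmap has_derivative DNmap x) (at x)"
proof -
  have i: "((\<lambda>x. x) has_derivative (\<lambda>h. h)) (at x)" by (rule has_derivative_ident)
  note f1 = has_derivative_fst[OF i] and s1 = has_derivative_snd[OF i]
  note m = has_derivative_mult[OF f1 s1]
  note pw = has_derivative_power[OF s1, of 2]
  note P = has_derivative_Pair[OF f1 has_derivative_Pair[OF m pw]]
  show ?thesis unfolding Nmap_def
    by (rule has_derivative_eq_rhs[OF P]) (simp add: DNmap_def fun_eq_iff algebra_simps)
qed

lemma deriv_unique_open:
  assumes "(f has_derivative F) (at x)" "(g has_derivative G) (at x)" "open S" "x \<in> S" "\<And>y. y \<in> S \<Longrightarrow> f y = g y"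
  shows "F = G"
proof -
  have "(g has_derivative F) (at x)" using has_derivative_transform_within_open[OF assms(1,3,4)] assms(5) by blast
  then show ?thesis using assms(2) has_derivative_unique by blast
qed

lemma cross_DNmap:
  "cross3 (DNmap x k1) (DNmap x k2) = (fst k1 * snd k2 - snd k1 * fst k2) *\<^sub>R (2 * snd x ^ 2, - 2 * snd x, fst x)"
  unfolding DNmap_def by (rule cross_DN)

lemma fd_works: "f differentiable at x \<Longrightarrow> (f has_derivative frechet_derivative f (at x)) (at x)"
  using frechet_derivative_works by blast

lemma crosscap_analysis:
  fixes U :: "R2 set" and f :: "R2 \<Rightarrow> R3" and p :: R2
  assumes U: "open U" "p \<in> U" and f: "smooth_on U f" and cc: "cross_cap U f p"
  defines "w \<equiv> \<lambda>q. cross3 (frechet_derivative f (at q) (1,0)) (frechet_derivative f (at q) (0,1))"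
  shows "\<exists>z. z \<noteq> 0 \<and> frechet_derivative f (at p) z = 0"
    and "w p = 0"
    and "\<And>h. frechet_derivative w (at p) h = 0 \<Longrightarrow> h = 0"
proof -
  obtain V \<phi> W \<Phi> where V0: "(0::R2) \<in> V" and dV: "diffeo_on V \<phi>" and \<phi>0: "\<phi> 0 = p" and VU: "\<phi> ` V \<subseteq> U"
    and fpW: "f p \<in> W" and dW: "diffeo_on W \<Phi>" and fW: "f ` (\<phi> ` V) \<subseteq> W"
    and N: "\<And>u v. (u, v) \<in> V \<Longrightarrow> \<Phi> (f (\<phi> (u, v))) = (u, u * v, v ^ 2)"
    using cc unfolding cross_cap_def by blast
  define Om where "Om = \<phi> ` V"
  define ch where "ch = inv_into V \<phi>"
  define \<Psi> where "\<Psi> = inv_into W \<Phi>"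
  have oV: "open V" and s\<phi>: "smooth_on V \<phi>" and i\<phi>: "inj_on \<phi> V" and oO: "open Om" and sch: "smooth_on Om ch"
    using dV unfolding diffeo_on_def Om_def ch_def by auto
  have oW: "open W" and s\<Phi>: "smooth_on W \<Phi>" and i\<Phi>: "inj_on \<Phi> W" and oPW: "open (\<Phi> ` W)" and s\<Psi>: "smooth_on (\<Phi> ` W) \<Psi>"
    using dW unfolding diffeo_on_def \<Psi>_def by auto
  have pO: "p \<in> Om" using V0 \<phi>0 unfolding Om_def by force
  have OU: "Om \<subseteq> U" using VU unfolding Om_def .
  have ch\<phi>: "ch (\<phi> x) = x" if "x \<in> V" for x unfolding ch_def using i\<phi> that by (rule inv_into_f_f)
  have chp: "ch p = 0" using ch\<phi>[OF V0] \<phi>0 by simp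
  have chV: "ch q \<in> V" if "q \<in> Om" for q unfolding ch_def using that unfolding Om_def by (rule inv_into_into)
  have \<phi>ch: "\<phi> (ch q) = q" if "q \<in> Om" for q unfolding ch_def using that unfolding Om_def by (rule f_inv_into_f)
  have \<Psi>\<Phi>: "\<Psi> (\<Phi> y) = y" if "y \<in> W" for y unfolding \<Psi>_def using i\<Phi> that by (rule inv_into_f_f)
  have fOW: "f q \<in> W" if "q \<in> Om" for q using fW that unfolding Om_def by blast
  have eqN: "\<Phi> (f q) = Nmap (ch q)" if q: "q \<in> Om" for q
  proof -
    obtain u v where uv: "ch q = (u, v)" by (cases "ch q")
    have "\<Phi> (f (\<phi> (u, v))) = (u, u * v, v ^ 2)" using N chV[OF q] uv by simp
    then show ?thesis using \<phi>ch[OF q] uv by (simp add: Nmap_def)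
  qed
  define D\<phi> where "D\<phi> = frechet_derivative \<phi> (at 0)"
  define Dch where "Dch = frechet_derivative ch (at p)"
  define D\<Phi> where "D\<Phi> = frechet_derivative \<Phi> (at (f p))"
  define D\<Psi> where "D\<Psi> = frechet_derivative \<Psi> (at (\<Phi> (f p)))"
  have h\<phi>: "(\<phi> has_derivative D\<phi>) (at 0)" unfolding D\<phi>_def by (rule fd_works, rule smooth_diff_at[OF s\<phi> oV V0])
  have hch: "(ch has_derivative frechet_derivative ch (at q)) (at q)" if "q \<in> Om" for q
    by (rule fd_works, rule smooth_diff_at[OF sch oO that])
  have h\<Phi>: "(\<Phi> has_derivative frechet_derivative \<Phi> (at y)) (at y)" if "y \<in> W" for y
    by (rule fd_works, rule smooth_diff_at[OF s\<Phi> oW that])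
  have h\<Psi>: "(\<Psi> has_derivative D\<Psi>) (at (\<Phi> (f p)))" unfolding D\<Psi>_def
    by (rule fd_works, rule smooth_diff_at[OF s\<Psi> oPW], use fpW in blast)
  have hf: "(f has_derivative frechet_derivative f (at q)) (at q)" if "q \<in> U" for q
    by (rule fd_works, rule smooth_diff_at[OF f U(1) that])
  have lch: "linear Dch" and l\<phi>: "linear D\<phi>" and l\<Psi>: "linear D\<Psi>" and lf: "linear (frechet_derivative f (at p))"
    using hch[OF pO] h\<phi> h\<Psi> hf[OF U(2)] unfolding Dch_def
    by (auto intro: bounded_linear.linear has_derivative_bounded_linear)
  have A: "Dch (D\<phi> k) = k" for k
  proof -
    have "((\<lambda>x. ch (\<phi> x)) has_derivative (\<lambda>k. Dch (D\<phi> k))) (at 0)"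
      using has_derivative_compose[OF h\<phi>, of ch Dch] hch[OF pO] \<phi>0 unfolding Dch_def by simp
    then have "(\<lambda>k. Dch (D\<phi> k)) = (\<lambda>k. k)"
      by (rule deriv_unique_open[OF _ has_derivative_ident oV V0]) (simp add: ch\<phi>)
    then show ?thesis by (metis)
  qed
  have B: "D\<phi> (Dch h) = h" for h
  proof -
    have "(\<phi> has_derivative D\<phi>) (at (ch p))" using h\<phi> chp by simp
    then have "((\<lambda>x. \<phi> (ch x)) has_derivative (\<lambda>k. D\<phi> (Dch k))) (at p)"
      using has_derivative_compose[OF hch[OF pO]] unfolding Dch_def by blast
    then have "(\<lambda>k. D\<phi> (Dch k)) = (\<lambda>k. k)"
      by (rule deriv_unique_open[OF _ has_derivative_ident oO pO]) (simp add: \<phi>ch)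
    then show ?thesis by (metis)
  qed
  have C: "D\<Psi> (D\<Phi> y) = y" for y
  proof -
    have "((\<lambda>x. \<Psi> (\<Phi> x)) has_derivative (\<lambda>k. D\<Psi> (D\<Phi> k))) (at (f p))"
      using has_derivative_compose[OF h\<Phi>[OF fpW] h\<Psi>] unfolding D\<Phi>_def by simp
    then have "(\<lambda>k. D\<Psi> (D\<Phi> k)) = (\<lambda>k. k)"
      by (rule deriv_unique_open[OF _ has_derivative_ident oW fpW]) (simp add: \<Psi>\<Phi>)
    then show ?thesis by (metis)
  qed
  have D: "frechet_derivative \<Phi> (at (f q)) (frechet_derivative f (at q) k) = DNmap (ch q) (frechet_derivative ch (at q) k)"
    if q: "q \<in> Om" for q k
  proof -
    have 1: "((\<lambda>x. \<Phi> (f x)) has_derivative (\<lambda>k. frechet_derivative \<Phi> (at (f q)) (frechet_derivative f (at q) k))) (at q)"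
      using has_derivative_compose[OF hf[of q] h\<Phi>[OF fOW[OF q]]] q OU by blast
    have 2: "((\<lambda>x. Nmap (ch x)) has_derivative (\<lambda>k. DNmap (ch q) (frechet_derivative ch (at q) k))) (at q)"
      using has_derivative_compose[OF hch[OF q] Nmap_deriv] by simp
    have "(\<lambda>k. frechet_derivative \<Phi> (at (f q)) (frechet_derivative f (at q) k)) = (\<lambda>k. DNmap (ch q) (frechet_derivative ch (at q) k))"
      by (rule deriv_unique_open[OF 1 2 oO q]) (simp add: eqN)
    then show ?thesis by (metis)
  qed
  define z0 where "z0 = D\<phi> (0,1)"
  have chz0: "Dch z0 = (0,1)" unfolding z0_def by (rule A)
  have z0: "z0 \<noteq> 0"
  proof
    assume "z0 = 0"
    then have "Dch z0 = 0" using linear_0[OF lch] by simp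
    then show False using chz0 by (simp add: zero_prod_def)
  qed
  have "D\<Phi> (frechet_derivative f (at p) z0) = DNmap (ch p) (Dch z0)"
    using D[OF pO, of z0] unfolding D\<Phi>_def Dch_def .
  also have "\<dots> = 0" unfolding chp chz0 by (simp add: DNmap_def zero_prod_def)
  finally have "D\<Psi> (D\<Phi> (frechet_derivative f (at p) z0)) = D\<Psi> 0" by simp
  then have Lz0: "frechet_derivative f (at p) z0 = 0" using C linear_0[OF l\<Psi>] by simp
  show "\<exists>z. z \<noteq> 0 \<and> frechet_derivative f (at p) z = 0" using z0 Lz0 by blast
  have "fst z0 *\<^sub>R frechet_derivative f (at p) (1,0) + snd z0 *\<^sub>R frechet_derivative f (at p) (0,1) = 0"
    using lin_R2[OF lf, of z0] Lz0 by simp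
  moreover have "(fst z0, snd z0) \<noteq> (0,0)" using z0 by (metis prod.collapse zero_prod_def)
  ultimately show wp: "w p = 0" unfolding w_def by (rule cross_dep)
  have b1: "(1::real,0::real) \<in> Basis" and b2: "(0::real,1::real) \<in> Basis" by (simp_all add: Basis_prod_def)
  have e1: "(1::real,0::real,0::real) \<in> Basis" and e2: "(0::real,1::real,0::real) \<in> Basis"
    and e3: "(0::real,0::real,1::real) \<in> Basis" by (simp_all add: Basis_prod_def zero_prod_def)
  define c1 where "c1 q = frechet_derivative \<Phi> (at (f q)) (1,0,0)" for q
  define c2 where "c2 q = frechet_derivative \<Phi> (at (f q)) (0,1,0)" for q
  define c3 where "c3 q = frechet_derivative \<Phi> (at (f q)) (0,0,1)" for q
  define m1 where "m1 q = frechet_derivative ch (at q) (1,0)" for q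
  define m2 where "m2 q = frechet_derivative ch (at q) (0,1)" for q
  define dt where "dt q = fst (m1 q) * snd (m2 q) - fst (m2 q) * snd (m1 q)" for q
  define sc where "sc q = (2 * (snd (ch q) * snd (ch q)), - 2 * snd (ch q), fst (ch q))" for q
  have ident: "Kc (c1 q) (c2 q) (c3 q) (w q) = dt q *\<^sub>R sc q" if q: "q \<in> Om" for q
  proof -
    define P where "P = frechet_derivative \<Phi> (at (f q))"
    have lP: "linear P" unfolding P_def using h\<Phi>[OF fOW[OF q]] by (auto intro: bounded_linear.linear has_derivative_bounded_linear)
    have "Kc (c1 q) (c2 q) (c3 q) (w q) = cross3 (P (frechet_derivative f (at q) (1,0))) (P (frechet_derivative f (at q) (0,1)))"
      using cross_lin_image[OF lP, of "frechet_derivative f (at q) (1,0)" "frechet_derivative f (at q) (0,1)"]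
      unfolding c1_def c2_def c3_def w_def P_def by (rule sym)
    also have "\<dots> = cross3 (DNmap (ch q) (m1 q)) (DNmap (ch q) (m2 q))"
      unfolding P_def D[OF q] m1_def m2_def ..
    also have "\<dots> = dt q *\<^sub>R sc q"
      unfolding cross_DNmap dt_def sc_def by (simp add: power2_eq_square algebra_simps)
    finally show ?thesis .
  qed
  have hc: "\<exists>D. (c has_derivative D) (at p)" if "c = (\<lambda>q. frechet_derivative \<Phi> (at (f q)) e)" "e \<in> Basis" for c e
  proof -
    have "(\<lambda>y. frechet_derivative \<Phi> (at y) e) differentiable at (f p)"
      by (rule smooth_diff_at[OF smooth_partial[OF s\<Phi> that(2)] oW fpW])
    from has_derivative_compose[OF hf[OF U(2)] fd_works[OF this]] show ?thesis unfolding that(1) by blast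
  qed
  obtain c1' where hc1: "(c1 has_derivative c1') (at p)" using hc[OF _ e1] unfolding c1_def by blast
  obtain c2' where hc2: "(c2 has_derivative c2') (at p)" using hc[OF _ e2] unfolding c2_def by blast
  obtain c3' where hc3: "(c3 has_derivative c3') (at p)" using hc[OF _ e3] unfolding c3_def by blast
  note hC1 = bounded_bilinear.FDERIV[OF bounded_bilinear_cross3 hc2 hc3]
  note hC2 = bounded_bilinear.FDERIV[OF bounded_bilinear_cross3 hc3 hc1]
  note hC3 = bounded_bilinear.FDERIV[OF bounded_bilinear_cross3 hc1 hc2]
  have sw: "smooth_on U w" unfolding w_def
    by (rule smooth_bilinear[OF bounded_bilinear_cross3 U(1) smooth_partial[OF f b1] smooth_partial[OF f b2]])
  define Dw where "Dw = frechet_derivative w (at p)"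
  have hw: "(w has_derivative Dw) (at p)" unfolding Dw_def by (rule fd_works[OF smooth_diff_at[OF sw U]])
  note hl = has_derivative_add[OF has_derivative_add[OF has_derivative_scaleR[OF has_derivative_fst[OF hw] hC1]
      has_derivative_scaleR[OF has_derivative_fst[OF has_derivative_snd[OF hw]] hC2]]
      has_derivative_scaleR[OF has_derivative_snd[OF has_derivative_snd[OF hw]] hC3]]
  have hm1: "(m1 has_derivative frechet_derivative m1 (at p)) (at p)" unfolding m1_def
    by (rule fd_works, rule smooth_diff_at[OF smooth_partial[OF sch b1] oO pO])
  have hm2: "(m2 has_derivative frechet_derivative m2 (at p)) (at p)" unfolding m2_def
    by (rule fd_works, rule smooth_diff_at[OF smooth_partial[OF sch b2] oO pO])
  have "\<exists>D. (dt has_derivative D) (at p)" unfolding dt_def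
    using has_derivative_diff[OF has_derivative_mult[OF has_derivative_fst[OF hm1] has_derivative_snd[OF hm2]]
       has_derivative_mult[OF has_derivative_fst[OF hm2] has_derivative_snd[OF hm1]]] by blast
  then obtain dt' where hdt: "(dt has_derivative dt') (at p)" by blast
  have hch: "(ch has_derivative Dch) (at p)" unfolding Dch_def using hch[OF pO] .
  note sn = has_derivative_snd[OF hch] and fs = has_derivative_fst[OF hch]
  note hsc0 = has_derivative_Pair[OF has_derivative_mult_right[OF has_derivative_mult[OF sn sn], of 2]
     has_derivative_Pair[OF has_derivative_mult_right[OF sn, of "- 2"] fs]]
  have hsc: "(sc has_derivative (\<lambda>k. (2 * (snd (ch p) * snd (Dch k) + snd (Dch k) * snd (ch p)), - 2 * snd (Dch k), fst (Dch k)))) (at p)"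
    unfolding sc_def using hsc0 .
  note hr = has_derivative_scaleR[OF hdt hsc]
  have eqO: "fst (w y) *\<^sub>R cross3 (c2 y) (c3 y) + fst (snd (w y)) *\<^sub>R cross3 (c3 y) (c1 y)
      + snd (snd (w y)) *\<^sub>R cross3 (c1 y) (c2 y) = dt y *\<^sub>R sc y" if "y \<in> Om" for y
    using ident[OF that] unfolding Kc_def .
  note lr = deriv_unique_open[OF hl hr oO pO eqO]
  have dtp: "dt p \<noteq> 0"
  proof -
    have m1p: "m1 p = Dch (1,0)" and m2p: "m2 p = Dch (0,1)" unfolding m1_def m2_def Dch_def by simp_all
    have q1: "fst (D\<phi> (1,0)) *\<^sub>R m1 p + snd (D\<phi> (1,0)) *\<^sub>R m2 p = (1,0)"
      using lin_R2[OF lch, of "D\<phi> (1,0)"] A[of "(1,0)"] unfolding m1p m2p by simp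
    have q2: "fst (D\<phi> (0,1)) *\<^sub>R m1 p + snd (D\<phi> (0,1)) *\<^sub>R m2 p = (0,1)"
      using lin_R2[OF lch, of "D\<phi> (0,1)"] A[of "(0,1)"] unfolding m1p m2p by simp
    define a where "a = fst (m1 p)" define c where "c = snd (m1 p)"
    define b where "b = fst (m2 p)" define d where "d = snd (m2 p)"
    define n11 where "n11 = fst (D\<phi> (1,0))" define n21 where "n21 = snd (D\<phi> (1,0))"
    define n12 where "n12 = fst (D\<phi> (0,1))" define n22 where "n22 = snd (D\<phi> (0,1))"
    have r1: "n11 * a + n21 * b = 1" "n11 * c + n21 * d = 0" using arg_cong[OF q1, of fst] arg_cong[OF q1, of snd] unfolding a_def b_def c_def d_def n11_def n21_def by (simp_all add: mult.commute)
    have r2: "n12 * a + n22 * b = 0" "n12 * c + n22 * d = 1" using arg_cong[OF q2, of fst] arg_cong[OF q2, of snd] unfolding a_def b_def c_def d_def n12_def n22_def by (simp_all add: mult.commute)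
    have "dt p * (n11 * n22 - n12 * n21) = (n11 * a + n21 * b) * (n12 * c + n22 * d) - (n12 * a + n22 * b) * (n11 * c + n21 * d)"
      unfolding dt_def a_def b_def c_def d_def by (simp add: algebra_simps)
    also have "\<dots> = 1" using r1 r2 by simp
    finally show ?thesis by auto
  qed
  show "h = 0" if Dwh: "frechet_derivative w (at p) h = 0" for h
  proof -
    have scp: "sc p = 0" unfolding sc_def chp by (simp add: zero_prod_def)
    have "dt p *\<^sub>R (2 * (snd (ch p) * snd (Dch h) + snd (Dch h) * snd (ch p)), - 2 * snd (Dch h), fst (Dch h)) + dt' h *\<^sub>R sc p = 0"
      using fun_cong[OF lr, of h] wp Dwh unfolding Dw_def by simp
    then have "dt p *\<^sub>R ((0::real), - 2 * snd (Dch h), fst (Dch h)) = 0" unfolding scp chp by simp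
    then have "snd (Dch h) = 0" "fst (Dch h) = 0" using dtp by (auto simp: zero_prod_def)
    then have "Dch h = 0" by (simp add: prod_eq_iff)
    then have "D\<phi> (Dch h) = 0" using linear_0[OF l\<phi>] by simp
    then show "h = 0" using B by simp
  qed
qed



lemma dep2:
  fixes a b :: R3
  assumes "(a \<bullet> a) * (b \<bullet> b) - (a \<bullet> b)^2 = 0"
  shows "\<exists>h::R2. h \<noteq> 0 \<and> fst h *\<^sub>R a + snd h *\<^sub>R b = 0"
proof (cases "a = 0")
  case True
  then show ?thesis by (intro exI[of _ "(1,0)"]) (simp add: zero_prod_def)
next
  case False
  then have aa: "a \<bullet> a > 0" by simp
  define t where "t = (a \<bullet> b) / (a \<bullet> a)"
  define v where "v = b - t *\<^sub>R a"
  have "v \<bullet> v = b \<bullet> b - 2 * t * (a \<bullet> b) + t * t * (a \<bullet> a)"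
    unfolding v_def by (simp add: inner_diff_left inner_diff_right inner_commute algebra_simps)
  also have "\<dots> = ((a \<bullet> a) * (b \<bullet> b) - (a \<bullet> b)^2) / (a \<bullet> a)"
    using aa unfolding t_def by (simp add: field_simps power2_eq_square)
  also have "\<dots> = 0" using assms by simp
  finally have "v = 0" by simp
  then show ?thesis unfolding v_def
    by (intro exI[of _ "(- t, 1)"]) (simp add: zero_prod_def algebra_simps)
qed

theorem corollary4p5:
  fixes U :: "R2 set" and f :: "R2 \<Rightarrow> R3" and p :: R2
  assumes "open U" and "smooth_on U f" and "p \<in> U" and "cross_cap U f p"
  shows "admissible_metric U (first_fundamental_form f)
         \<and> intrinsic_cross_cap U (first_fundamental_form f) p"
proof -
  note U = assms(1,3) and f = assms(2) and cc = assms(4)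
  define g where "g = first_fundamental_form f"
  define w where "w = (\<lambda>q. cross3 (frechet_derivative f (at q) (1,0)) (frechet_derivative f (at q) (0,1)))"
  have adm: "admissible_metric U g" unfolding g_def by (rule admissible_fff[OF U(1) f])
  note ca = crosscap_analysis[OF U f cc]
  have sing: "singular_point g p"
  proof -
    obtain z where z: "z \<noteq> 0" "frechet_derivative f (at p) z = 0" using ca(1) by blast
    then have "\<not> g p z z > 0" unfolding g_def first_fundamental_form_def by simp
    then show ?thesis unfolding singular_point_def using z(1) by blast
  qed
  have b1: "(1::real,0::real) \<in> Basis" and b2: "(0::real,1::real) \<in> Basis" by (simp_all add: Basis_prod_def)
  have sw: "smooth_on U w" unfolding w_def
    by (rule smooth_bilinear[OF bounded_bilinear_cross3 U(1) smooth_partial[OF f b1] smooth_partial[OF f b2]])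
  have delta: "metric_delta g = (\<lambda>q. w q \<bullet> w q)"
    unfolding metric_delta_def g_def coefE_def coefF_def coefG_def first_fundamental_form_def w_def
    by (simp add: fun_eq_iff lagrange inner_commute)
  have hw: "(w has_derivative frechet_derivative w (at q)) (at q)" if "q \<in> U" for q
    by (rule fd_works[OF smooth_diff_at[OF sw U(1) that]])
  define Dw where "Dw = frechet_derivative w (at p)"
  have wp: "w p = 0" using ca(2) unfolding w_def by simp
  have second: "pderiv_dir e' (pderiv_dir e (metric_delta g)) p = Dw e' \<bullet> Dw e + Dw e \<bullet> Dw e'"
    if e: "e \<in> Basis" for e e'
  proof -
    define We where "We q = frechet_derivative w (at q) e" for q
    have first: "pderiv_dir e (metric_delta g) q = w q \<bullet> We q + We q \<bullet> w q" if q: "q \<in> U" for q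
    proof -
      have "((\<lambda>q. w q \<bullet> w q) has_derivative (\<lambda>h. w q \<bullet> frechet_derivative w (at q) h + frechet_derivative w (at q) h \<bullet> w q)) (at q)"
        by (rule has_derivative_inner[OF hw[OF q] hw[OF q]])
      from frechet_derivative_at[OF this, symmetric] show ?thesis
        unfolding pderiv_dir_def delta We_def by simp
    qed
    have hWe: "(We has_derivative frechet_derivative We (at p)) (at p)" unfolding We_def
      by (rule fd_works, rule smooth_diff_at[OF smooth_partial[OF sw e] U])
    have "((\<lambda>q. w q \<bullet> We q + We q \<bullet> w q) has_derivative
        (\<lambda>k. (w p \<bullet> frechet_derivative We (at p) k + Dw k \<bullet> We p) + (We p \<bullet> Dw k + frechet_derivative We (at p) k \<bullet> w p))) (at p)"
      unfolding Dw_def by (rule has_derivative_add[OF has_derivative_inner[OF hw[OF U(2)] hWe] has_derivative_inner[OF hWe hw[OF U(2)]]])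
    then have "(pderiv_dir e (metric_delta g) has_derivative
        (\<lambda>k. (w p \<bullet> frechet_derivative We (at p) k + Dw k \<bullet> We p) + (We p \<bullet> Dw k + frechet_derivative We (at p) k \<bullet> w p))) (at p)"
      by (rule has_derivative_transform_within_open[OF _ U(1) U(2)]) (simp add: first)
    from frechet_derivative_at[OF this, symmetric] show ?thesis
      unfolding pderiv_dir_def[of e'] wp by (simp add: We_def Dw_def)
  qed
  have lw: "linear Dw" unfolding Dw_def by (rule fd_linear[OF smooth_diff_at[OF sw U]])
  define a where "a = Dw (1,0)"
  define b where "b = Dw (0,1)"
  have hess: "(a \<bullet> a + a \<bullet> a) * (b \<bullet> b + b \<bullet> b) - (b \<bullet> a + a \<bullet> b)^2 \<noteq> 0"
  proof
    assume "(a \<bullet> a + a \<bullet> a) * (b \<bullet> b + b \<bullet> b) - (b \<bullet> a + a \<bullet> b)^2 = 0"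
    then have "(a \<bullet> a) * (b \<bullet> b) - (a \<bullet> b)^2 = 0" by (simp add: inner_commute power2_eq_square algebra_simps)
    then obtain h :: R2 where h: "h \<noteq> 0" "fst h *\<^sub>R a + snd h *\<^sub>R b = 0" using dep2 by blast
    then have "Dw h = 0" using lin_R2[OF lw, of h] unfolding a_def b_def by simp
    then have "h = 0" using ca(3) unfolding Dw_def w_def by blast
    then show False using h(1) by simp
  qed
  have "intrinsic_cross_cap U g p"
    unfolding intrinsic_cross_cap_def Let_def
    using adm U(2) sing hess second[OF b1, of "(1,0)"] second[OF b2, of "(0,1)"] second[OF b1, of "(0,1)"]
    unfolding a_def b_def by simp
  then show ?thesis using adm unfolding g_def by simp
qed

end
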